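(* In the full-information setting, let $\beta=\frac1K$ and run Gaptron with gap map $a(\mathbf W_t,\mathbf x_t)=1-\max\{\mathbb 1[m_t^\star>\beta],\,m_t^\star\}$, learning rate $\eta=\frac{1-\beta}{KX^2}$, exploration rate $\gamma=0$, and the multiclass hinge loss $$\ell_t(\mathbf W)=\begin{cases}\max\{1-m_t(\mathbf W,y_t),0\}&\text{if } m_t^\star\le\beta,\\ \max\{1-m_t(\mathbf W,y_t),0\}&\text{if } y_t^\star\ne y_t\text{ and } m_t^\star>\beta,\\ 0&\text{if } y_t^\star=y_t\text{ and } m_t^\star>\beta.\end{cases}$$ Then for every $\mathbf U\in\mathcal W$, $$\mathbb E\Big[\sum_{t=1}^T\mathbb 1[y'_t\ne y_t]\Big]\le\sum_{t=1}^T\ell_t(\mathbf U)+\frac{K^2X^2\|\mathbf U\|^2}{2(K-1)}.$$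
   Context: Setting and notation. Fix integers $K\ge 2$, $d\ge1$, $T\ge1$ and reals $X>0$, $D>0$. Matrices $\mathbf W\in\mathbb{R}^{K\times d}$ have rows $\mathbf W^1,\dots,\mathbf W^K\in\mathbb{R}^d$ and are identified with vectors in $\mathbb{R}^{Kd}$; $\langle\cdot,\cdot\rangle$ is the Euclidean inner product and $\|\cdot\|$ the Euclidean (Frobenius) norm. $\mathcal W=\{\mathbf W:\|\mathbf W\|\le D\}$. $\mathbf e_k$ is the $k$-th standard basis vector of $\mathbb R^K$ and $\mathbf 1\in\mathbb R^K$ the all-ones vector. In each round $t=1,\dots,T$ the environment chooses a label $y_t\in\{1,\dots,K\}$ and a feature vector $\mathbf x_t\in\mathbb R^d$ with $\|\mathbf x_t\|\le X$ (possibly depending on the learner's past predictions $y'_1,\dots,y'_{t-1}$ but not on its current random draw); the learner sees $\mathbf x_t$, outputs a random label $y'_t$, and then observes $y_t$ (full-information setting) or only $\mathbb 1[y'_t\ne y_t]$ (bandit setting). Gaptron, with learning rate $\eta>0$, exploration rate $\gamma\in[0,1]$, gap map $a:\mathbb R^{K\times d}\times\mathbb R^d\to[0,1]$ and loss functions $\ell_t$: set $\mathbf W_1=\mathbf 0$; for $t=1,\dots,T$: let $y_t^\star=\arg\max_k\langle \mathbf W_t^k,\mathbf x_t\rangle$ (ties broken arbitrarily), $a_t=a(\mathbf W_t,\mathbf x_t)$, $\mathbf p'_t=(1-\max\{a_t,\gamma\})\mathbf e_{y_t^\star}+\max\{a_t,\gamma\}\frac1K\mathbf 1$; draw $y'_t\sim\mathbf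 p'_t$ ($p'_t(k)$ denotes the probability of label $k$); set $\mathbf g_t=\nabla\ell_t(\mathbf W_t)$; update $\mathbf W_{t+1}=\arg\min_{\mathbf W\in\mathcal W}\ \eta\langle\mathbf g_t,\mathbf W\rangle+\frac12\|\mathbf W-\mathbf W_t\|^2$. $\mathbb E$ denotes expectation over the learner's randomization. Margins: $m_t(\mathbf W,y)=\langle\mathbf W^y,\mathbf x_t\rangle-\max_{k\ne y}\langle\mathbf W^k,\mathbf x_t\rangle$ and $m_t^\star=\max_k m_t(\mathbf W_t,k)$, where $\mathbf W_t$ is Gaptron's current iterate; in the definition of $\ell_t$ the case distinction uses $y_t^\star$ and $m_t^\star$ computed from $\mathbf W_t$, so $\ell_t$ is, as a function of $\mathbf W$, either $\max\{1-m_t(\mathbf W,y_t),0\}$ or identically $0$. The gradient used is $\mathbf g_t=(\mathbf e_{\tilde k}-\mathbf e_{y_t})\otimes\mathbf x_t$ with $\tilde k=\arg\max_{k\ne y_t}\langle\mathbf W_t^k,\mathbf x_t\rangle$ in the first two cases and $\mathbf g_t=\mathbf 0$ in the third, where $\mathbf v\otimes\mathbf x$ is the $K\times d$ matrix with rows $v_k\mathbf x$. *)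

theory Defs
  imports "HOL-Analysis.Analysis"
begin

text \<open>Labels form a finite type 'k (K = CARD('k)), features live in real^'d.
  A weight matrix W has rows W$k :: real^'d; the norm and inner product on
  real^'d^'k are the Frobenius ones.\<close>

type_synonym ('d,'k) mat = "real ^ 'd ^ 'k"

definition score :: "('d::finite,'k::finite) mat \<Rightarrow> real^'d \<Rightarrow> 'k \<Rightarrow> real" where
  "score W x k = inner (W $ k) x"

definition margin :: "('d::finite,'k::finite) mat \<Rightarrow> real^'d \<Rightarrow> 'k \<Rightarrow> real" where
  "margin W x y = score W x y - Max ((score W x) ` {k. k \<noteq> y})"

definition max_margin :: "('d::finite,'k::finite) mat \<Rightarrow> real^'d \<Rightarrow> real" where
  "max_margin W x = Max ((margin W x) ` UNIV)"

definition valid_ystar :: "(('d::finite,'k::finite) mat \<Rightarrow> real^'d \<Rightarrow> 'k) \<Rightarrow> bool" where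
  "valid_ystar ys \<longleftrightarrow> (\<forall>W x k. score W x k \<le> score W x (ys W x))"

definition valid_ktil :: "(('d::finite,'k::finite) mat \<Rightarrow> real^'d \<Rightarrow> 'k \<Rightarrow> 'k) \<Rightarrow> bool" where
  "valid_ktil kt \<longleftrightarrow> (\<forall>W x y. kt W x y \<noteq> y \<and> (\<forall>k. k \<noteq> y \<longrightarrow> score W x k \<le> score W x (kt W x y)))"

definition pred_prob :: "(('d::finite,'k::finite) mat \<Rightarrow> real^'d \<Rightarrow> 'k) \<Rightarrow>
    (('d,'k) mat \<Rightarrow> real^'d \<Rightarrow> real) \<Rightarrow> real \<Rightarrow> ('d,'k) mat \<Rightarrow> real^'d \<Rightarrow> 'k \<Rightarrow> real" where
  "pred_prob ys a \<gamma> W x k =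
     (1 - max (a W x) \<gamma>) * (if k = ys W x then 1 else 0) + max (a W x) \<gamma> / real CARD('k)"

definition gaptron_update :: "real \<Rightarrow> real \<Rightarrow> ('d::finite,'k::finite) mat \<Rightarrow> ('d,'k) mat \<Rightarrow> ('d,'k) mat" where
  "gaptron_update D \<eta> g Wt =
     (SOME W. norm W \<le> D \<and> (\<forall>V. norm V \<le> D \<longrightarrow>
        \<eta> * inner g W + (1/2) * (norm (W - Wt))\<^sup>2 \<le> \<eta> * inner g V + (1/2) * (norm (V - Wt))\<^sup>2))"

text \<open>Expected value (over the learner's randomization) of a sum over n rounds of a
  per-round quantity f W_t x_t y_t y'_t, for an adaptive environment env mapping the
  history of the learner's past predictions to (y_t, x_t). grad W x y is the gradient
  g_t used in the update.\<close>
fun gaptron_exp ::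
  "real \<Rightarrow> real \<Rightarrow> real \<Rightarrow> (('d::finite,'k::finite) mat \<Rightarrow> real^'d \<Rightarrow> 'k) \<Rightarrow>
   (('d,'k) mat \<Rightarrow> real^'d \<Rightarrow> real) \<Rightarrow>
   (('d,'k) mat \<Rightarrow> real^'d \<Rightarrow> 'k \<Rightarrow> ('d,'k) mat) \<Rightarrow>
   ('k list \<Rightarrow> 'k \<times> (real^'d)) \<Rightarrow>
   (('d,'k) mat \<Rightarrow> real^'d \<Rightarrow> 'k \<Rightarrow> 'k \<Rightarrow> real) \<Rightarrow>
   nat \<Rightarrow> 'k list \<Rightarrow> ('d,'k) mat \<Rightarrow> real" where
  "gaptron_exp D \<eta> \<gamma> ys a grad env f 0 h W = 0"
| "gaptron_exp D \<eta> \<gamma> ys a grad env f (Suc n) h W =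
     (let y = fst (env h); x = snd (env h);
          W' = gaptron_update D \<eta> (grad W x y) W
      in \<Sum>k\<in>UNIV. pred_prob ys a \<gamma> W x k *
            (f W x y k + gaptron_exp D \<eta> \<gamma> ys a grad env f n (h @ [k]) W'))"

definition gap_map :: "real \<Rightarrow> ('d::finite,'k::finite) mat \<Rightarrow> real^'d \<Rightarrow> real" where
  "gap_map \<beta> W x = 1 - max (if max_margin W x > \<beta> then 1 else 0) (max_margin W x)"

definition hinge_loss_t :: "(('d::finite,'k::finite) mat \<Rightarrow> real^'d \<Rightarrow> 'k) \<Rightarrow> real \<Rightarrow>
    ('d,'k) mat \<Rightarrow> real^'d \<Rightarrow> 'k \<Rightarrow> ('d,'k) mat \<Rightarrow> real" where
  "hinge_loss_t ys \<beta> Wt x y U =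
     (if ys Wt x = y \<and> max_margin Wt x > \<beta> then 0 else max (1 - margin U x y) 0)"

definition hinge_grad :: "(('d::finite,'k::finite) mat \<Rightarrow> real^'d \<Rightarrow> 'k) \<Rightarrow>
    (('d,'k) mat \<Rightarrow> real^'d \<Rightarrow> 'k \<Rightarrow> 'k) \<Rightarrow> real \<Rightarrow>
    ('d,'k) mat \<Rightarrow> real^'d \<Rightarrow> 'k \<Rightarrow> ('d,'k) mat" where
  "hinge_grad ys kt \<beta> Wt x y =
     (if ys Wt x = y \<and> max_margin Wt x > \<beta> then 0
      else (\<chi> k. (if k = kt Wt x y then x else 0) - (if k = y then x else 0)))"

end

theory Submission
  imports Defs
begin

lemma update_prop:
  fixes g Wt U :: "('d::finite,'k::finite) mat"
  assumes D: "D \<ge> 0" and U: "norm U \<le> D"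
  shows "norm (gaptron_update D \<eta> g Wt) \<le> D \<and>
         (norm (gaptron_update D \<eta> g Wt - U))\<^sup>2 \<le> (norm (Wt - \<eta> *\<^sub>R g - U))\<^sup>2"
proof -
  define z where "z = Wt - \<eta> *\<^sub>R g"
  have key: "\<eta> * inner g W + (1/2) * (norm (W - Wt))\<^sup>2 =
     (1/2) * (norm (W - z))\<^sup>2 + (\<eta> * inner g Wt - \<eta>\<^sup>2/2 * (norm g)\<^sup>2)" for W
    unfolding z_def power2_norm_eq_inner
    by (simp add: inner_diff_left inner_diff_right inner_commute algebra_simps power2_eq_square)
  define S where "S = cball (0::('d,'k) mat) D"
  have S: "closed S" "S \<noteq> {}" "convex S" using D by (auto simp: S_def)
  define c where "c = closest_point S z"
  have cS: "c \<in> S" and cmin: "\<forall>y\<in>S. dist z c \<le> dist z y"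
    using closest_point_exists[OF S(1,2)] c_def by auto
  have "\<exists>W. norm W \<le> D \<and> (\<forall>V. norm V \<le> D \<longrightarrow>
        \<eta> * inner g W + (1/2) * (norm (W - Wt))\<^sup>2 \<le> \<eta> * inner g V + (1/2) * (norm (V - Wt))\<^sup>2)"
  proof (intro exI[of _ c] conjI allI impI)
    show "norm c \<le> D" using cS by (simp add: S_def)
    fix V :: "('d,'k) mat" assume "norm V \<le> D"
    hence "dist z c \<le> dist z V" using cmin by (simp add: S_def)
    hence "norm (c - z) \<le> norm (V - z)" by (simp add: dist_norm norm_minus_commute)
    hence "(norm (c - z))\<^sup>2 \<le> (norm (V - z))\<^sup>2" by (simp add: power_mono)
    thus "\<eta> * inner g c + (1/2) * (norm (c - Wt))\<^sup>2 \<le> \<eta> * inner g V + (1/2) * (norm (V - Wt))\<^sup>2"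
      unfolding key by linarith
  qed
  then have P: "norm (gaptron_update D \<eta> g Wt) \<le> D \<and> (\<forall>V. norm V \<le> D \<longrightarrow>
        \<eta> * inner g (gaptron_update D \<eta> g Wt) + (1/2) * (norm (gaptron_update D \<eta> g Wt - Wt))\<^sup>2
        \<le> \<eta> * inner g V + (1/2) * (norm (V - Wt))\<^sup>2)"
    unfolding gaptron_update_def by (rule someI_ex)
  define W' where "W' = gaptron_update D \<eta> g Wt"
  have W'S: "W' \<in> S" using P by (simp add: W'_def S_def)
  have "\<forall>y\<in>S. dist z W' \<le> dist z y"
  proof
    fix V assume "V \<in> S"
    hence "norm V \<le> D" by (simp add: S_def)
    with P have "(1/2) * (norm (W' - z))\<^sup>2 + (\<eta> * inner g Wt - \<eta>\<^sup>2/2 * (norm g)\<^sup>2) \<le> (1/2) * (norm (V - z))\<^sup>2 + (\<eta> * inner g Wt - \<eta>\<^sup>2/2 * (norm g)\<^sup>2)"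
      unfolding W'_def key by blast
    hence "(1/2) * (norm (W' - z))\<^sup>2 \<le> (1/2) * (norm (V - z))\<^sup>2" by linarith
    hence h2: "(norm (W' - z))\<^sup>2 \<le> (norm (V - z))\<^sup>2" by linarith
    have "norm (W' - z) \<le> norm (V - z)"
      by (rule power2_le_imp_le[OF h2 norm_ge_zero])
    thus "dist z W' \<le> dist z V" by (simp add: dist_norm norm_minus_commute)
  qed
  from any_closest_point_dot[OF S(3,1) W'S _ this, of U] U
  have dot: "inner (z - W') (U - W') \<le> 0" by (simp add: S_def)
  have "z - U = (z - W') - (U - W')" by simp
  hence "(norm (z - U))\<^sup>2 = (norm ((z - W') - (U - W')))\<^sup>2" by simp
  also have "\<dots> = (norm (z - W'))\<^sup>2 + (norm (W' - U))\<^sup>2 - 2 * inner (z - W') (U - W')"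
    using dot_norm_neg[of "z - W'" "U - W'"] by (simp add: norm_minus_commute)
  finally have "(norm (z - U))\<^sup>2 = (norm (z - W'))\<^sup>2 + (norm (W' - U))\<^sup>2 - 2 * inner (z - W') (U - W')" .
  moreover have "0 \<le> (norm (z - W'))\<^sup>2" by simp
  ultimately have "(norm (W' - U))\<^sup>2 \<le> (norm (z - U))\<^sup>2" using dot by linarith
  thus ?thesis using P unfolding W'_def z_def by simp
qed

lemma exists_other:
  assumes "CARD('k::finite) \<ge> 2"
  shows "\<exists>k::'k. k \<noteq> y"
proof (rule ccontr)
  assume "\<not> ?thesis"
  hence "(UNIV::'k set) = {y}" by auto
  hence "card (UNIV::'k set) = card {y}" by (rule arg_cong)
  hence "CARD('k) = 1" by simp
  thus False using assms by simp
qed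

lemma margin_le_max:
  fixes W :: "('d::finite,'k::finite) mat"
  shows "margin W x y \<le> max_margin W x"
  unfolding max_margin_def by (rule Max_ge) auto

lemma margin_other:
  fixes W :: "('d::finite,'k::finite) mat" and ys :: "('d,'k) mat \<Rightarrow> real^'d \<Rightarrow> 'k"
  assumes vy: "valid_ystar ys" and K2: "CARD('k) \<ge> 2" and ne: "y \<noteq> ys W x"
  shows "margin W x y \<le> - max_margin W x"
proof -
  define s where "s = score W x"
  define z where "z = ys W x"
  have smax: "s k \<le> s z" for k using vy unfolding valid_ystar_def s_def z_def by blast
  have m1: "margin W x y \<le> s y - s z"
    unfolding margin_def s_def[symmetric]
    using Max_ge[of "s ` {k. k \<noteq> y}" "s z"] ne z_def by auto
  have "max_margin W x \<le> s z - s y"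
    unfolding max_margin_def
  proof (rule Max.boundedI)
    show "finite (range (margin W x))" by simp
    show "range (margin W x) \<noteq> {}" by simp
    fix m assume "m \<in> range (margin W x)"
    then obtain k where k: "m = margin W x k" by auto
    show "m \<le> s z - s y"
    proof (cases "k = z")
      case True
      have "s y \<le> Max (s ` {j. j \<noteq> z})" using Max_ge[of "s ` {j. j \<noteq> z}" "s y"] ne z_def by auto
      thus ?thesis unfolding k True margin_def s_def by simp
    next
      case False
      have "s z \<le> Max (s ` {j. j \<noteq> k})" using Max_ge[of "s ` {j. j \<noteq> k}" "s z"] False by auto
      thus ?thesis unfolding k margin_def s_def[symmetric] using smax[of y] smax[of k] by simp
    qed
  qed
  with m1 show ?thesis by simp
qed

lemma max_margin_nonneg:
  fixes W :: "('d::finite,'k::finite) mat" and ys :: "('d,'k) mat \<Rightarrow> real^'d \<Rightarrow> 'k"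
  assumes vy: "valid_ystar ys" and K2: "CARD('k) \<ge> 2"
  shows "0 \<le> max_margin W x"
proof -
  define s where "s = score W x"
  define z where "z = ys W x"
  have smax: "s k \<le> s z" for k using vy unfolding valid_ystar_def s_def z_def by blast
  obtain k0 where "k0 \<noteq> z" using exists_other[OF K2] by blast
  hence "{j. j \<noteq> z} \<noteq> {}" by auto
  hence "Max (s ` {j. j \<noteq> z}) \<le> s z" using smax by (subst Max_le_iff) auto
  hence "0 \<le> margin W x z" unfolding margin_def s_def by simp
  also have "\<dots> \<le> max_margin W x" by (rule margin_le_max)
  finally show ?thesis .
qed

lemma inner_grad:
  fixes V :: "('d::finite,'k::finite) mat" and x :: "real^'d"
  assumes "kk \<noteq> y"
  shows "inner (\<chi> k. (if k = kk then x else 0) - (if k = y then x else 0)) V = inner x (V $ kk) - inner x (V $ y)"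
proof -
  have "inner (\<chi> k. (if k = kk then x else 0) - (if k = y then x else 0)) V
     = (\<Sum>k\<in>UNIV. (if k = kk then inner x (V $ k) else 0) - (if k = y then inner x (V $ k) else 0))"
    unfolding inner_vec_def[where 'a="real^'d" and 'b='k] by (intro sum.cong) (auto simp: inner_diff_left)
  also have "\<dots> = inner x (V $ kk) - inner x (V $ y)"
    by (simp add: sum_subtractf)
  finally show ?thesis .
qed

lemma mist_sum:
  "(\<Sum>k\<in>(UNIV::'k::finite set). ((1 - A) * (if k = z then 1 else 0) + A / real CARD('k)) * (if k \<noteq> y then 1 else 0))
   = (1 - A) * (if z \<noteq> y then 1 else 0) + A * (real CARD('k) - 1) / real CARD('k)"
proof -
  have "(\<Sum>k\<in>(UNIV::'k set). ((1 - A) * (if k = z then 1 else 0) + A / real CARD('k)) * (if k \<noteq> y then 1 else 0))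
     = (\<Sum>k\<in>(UNIV::'k set). ((if k = z then (1 - A) * (if z \<noteq> y then 1 else 0) else 0) + A / real CARD('k))
           - (if k = y then A / real CARD('k) else 0))"
    by (intro sum.cong) auto
  also have "\<dots> = (1 - A) * (if z \<noteq> y then 1 else 0) + A - A / real CARD('k)"
    by (simp add: sum_subtractf sum.distrib)
  also have "\<dots> = (1 - A) * (if z \<noteq> y then 1 else 0) + A * (real CARD('k) - 1) / real CARD('k)"
    by (simp add: field_simps)
  finally show ?thesis .
qed

lemma arith1:
  fixes t m M :: real
  assumes "0 < t" "0 \<le> m" "m \<le> t" "M \<le> m"
  shows "(1 - m) * (1 - t) \<le> (1 - M) - (1 - t) * t"
proof -
  have h: "m * t \<le> t * t" using assms by (intro mult_right_mono) auto
  have e1: "(1 - m) * (1 - t) = 1 - m - t + m * t" by (simp add: algebra_simps)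
  have e2: "(1 - t) * t = t - t * t" by (simp add: algebra_simps)
  show ?thesis unfolding e1 e2 using h assms by linarith
qed

lemma arith2:
  fixes t m M :: real
  assumes "0 < t" "t \<le> 1" "0 \<le> m" "m \<le> t" "M \<le> - m"
  shows "m + (1 - m) * (1 - t) \<le> (1 - M) - (1 - t) * t"
proof -
  have h: "m * t \<le> m" using assms by (simp add: mult_left_le)
  have h2: "0 \<le> t * t" by simp
  have e1: "(1 - m) * (1 - t) = 1 - m - t + m * t" by (simp add: algebra_simps)
  have e2: "(1 - t) * t = t - t * t" by (simp add: algebra_simps)
  show ?thesis unfolding e1 e2 using h h2 assms by linarith
qed

lemma arith3:
  fixes t m M :: real
  assumes "0 < t" "t \<le> 1" "t < m" "M \<le> - m"
  shows "1 \<le> (1 - M) - (1 - t) * t"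
proof -
  have h2: "0 \<le> t * t" by simp
  have e2: "(1 - t) * t = t - t * t" by (simp add: algebra_simps)
  show ?thesis unfolding e2 using h2 assms by linarith
qed

lemma per_round:
  fixes ys :: "('d::finite,'k::finite) mat \<Rightarrow> real^'d \<Rightarrow> 'k"
    and kt :: "('d,'k) mat \<Rightarrow> real^'d \<Rightarrow> 'k \<Rightarrow> 'k"
    and W U :: "('d,'k) mat" and x :: "real^'d" and y :: 'k
  assumes K2: "CARD('k) \<ge> 2" and Xp: "X > 0" and xX: "norm x \<le> X"
    and D: "D \<ge> 0" and U: "norm U \<le> D"
    and vy: "valid_ystar ys" and vk: "valid_ktil kt"
    and K_def: "K = real CARD('k)" and eta: "\<eta> = (1 - 1/K) / (K * X\<^sup>2)"
  shows "(\<Sum>k\<in>UNIV. pred_prob ys (gap_map (1/K)) 0 W x k * (if k \<noteq> y then 1 else 0))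
     + (norm (gaptron_update D \<eta> (hinge_grad ys kt (1/K) W x y) W - U))\<^sup>2 / (2 * \<eta>)
     \<le> hinge_loss_t ys (1/K) W x y U + (norm (W - U))\<^sup>2 / (2 * \<eta>)"
proof -
  define t where "t = 1 / K"
  define m where "m = max_margin W x"
  define g where "g = hinge_grad ys kt t W x y"
  define W' where "W' = gaptron_update D \<eta> g W"
  define A where "A = max (gap_map t W x) 0"
  define mist where "mist = (\<Sum>k\<in>UNIV. pred_prob ys (gap_map t) 0 W x k * (if k \<noteq> y then 1 else 0))"
  have K2': "K \<ge> 2" using K2 K_def by simp
  have tpos: "0 < t" and t1: "t \<le> 1" using K2' by (auto simp: t_def)
  have etat: "\<eta> * X\<^sup>2 = (1 - t) * t" using Xp K2' unfolding eta t_def by (simp add: field_simps)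
  have etap: "\<eta> > 0" using Xp K2' unfolding eta by (simp add: field_simps)
  have Km1: "(K - 1) / K = 1 - t" using K2' unfolding t_def by (simp add: field_simps)
  have mist_eq: "mist = (1 - A) * (if ys W x \<noteq> y then 1 else 0) + A * (1 - t)"
  proof -
    have "mist = (1 - A) * (if ys W x \<noteq> y then 1 else 0) + A * (K - 1) / K"
    proof -
      have "mist = (\<Sum>k\<in>UNIV. ((1 - A) * (if k = ys W x then 1 else 0) + A / real CARD('k)) * (if k \<noteq> y then 1 else 0))"
        unfolding mist_def pred_prob_def A_def by (rule refl)
      also have "\<dots> = (1 - A) * (if ys W x \<noteq> y then 1 else 0) + A * (real CARD('k) - 1) / real CARD('k)"
        by (rule mist_sum)
      finally show ?thesis unfolding K_def .
    qed
    moreover have "A * (K - 1) / K = A * ((K - 1) / K)" by simp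
    ultimately show ?thesis using Km1 by simp
  qed
  have m0: "0 \<le> m" unfolding m_def by (rule max_margin_nonneg[OF vy K2])
  have upd: "(norm (W' - U))\<^sup>2 \<le> (norm (W - \<eta> *\<^sub>R g - U))\<^sup>2"
    using update_prop[OF D U] unfolding W'_def by blast
  have expand: "(norm (W - \<eta> *\<^sub>R g - U))\<^sup>2 = (norm (W - U))\<^sup>2 - 2 * \<eta> * inner g (W - U) + \<eta>\<^sup>2 * (norm g)\<^sup>2"
    unfolding power2_norm_eq_inner
    by (simp add: inner_diff_left inner_diff_right inner_commute algebra_simps power2_eq_square)
  have div: "(norm (W' - U))\<^sup>2 / (2 * \<eta>) \<le> (norm (W - U))\<^sup>2 / (2 * \<eta>) - inner g (W - U) + \<eta> / 2 * (norm g)\<^sup>2"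
  proof -
    have "(norm (W' - U))\<^sup>2 / (2 * \<eta>) \<le> ((norm (W - U))\<^sup>2 - 2 * \<eta> * inner g (W - U) + \<eta>\<^sup>2 * (norm g)\<^sup>2) / (2 * \<eta>)"
      using upd expand etap by (intro divide_right_mono) auto
    also have "\<dots> = (norm (W - U))\<^sup>2 / (2 * \<eta>) - inner g (W - U) + \<eta> / 2 * (norm g)\<^sup>2"
      using etap by (simp add: field_simps power2_eq_square)
    finally show ?thesis .
  qed
  have goal: "mist + (norm (W' - U))\<^sup>2 / (2 * \<eta>) \<le> hinge_loss_t ys t W x y U + (norm (W - U))\<^sup>2 / (2 * \<eta>)"
  proof (cases "ys W x = y \<and> m > t")
    case True
    have g0: "g = 0" using True unfolding g_def hinge_grad_def m_def by simp
    have l0: "hinge_loss_t ys t W x y U = 0" using True unfolding hinge_loss_t_def m_def by simp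
    have "gap_map t W x \<le> 0" using True unfolding gap_map_def m_def by simp
    hence "A = 0" unfolding A_def by simp
    hence "mist = 0" using mist_eq True by simp
    thus ?thesis using div g0 l0 by simp
  next
    case False
    define kk where "kk = kt W x y"
    have kk: "kk \<noteq> y" "\<And>k. k \<noteq> y \<Longrightarrow> score W x k \<le> score W x kk"
      using vk unfolding valid_ktil_def kk_def by blast+
    have gdef: "g = (\<chi> k. (if k = kk then x else 0) - (if k = y then x else 0))"
      using False by (auto simp: g_def hinge_grad_def m_def kk_def)
    have ell: "hinge_loss_t ys t W x y U = max (1 - margin U x y) 0"
      using False by (auto simp: hinge_loss_t_def m_def)
    have MaxW: "Max (score W x ` {k. k \<noteq> y}) = score W x kk"
      by (rule Max_eqI) (use kk in auto)
    have gW: "inner g W = - margin W x y"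
      unfolding gdef inner_grad[OF kk(1)] margin_def MaxW by (simp add: score_def inner_commute)
    have "score U x kk \<le> Max (score U x ` {k. k \<noteq> y})"
      by (rule Max_ge) (use kk in auto)
    hence gU: "inner g U \<le> - margin U x y"
      unfolding gdef inner_grad[OF kk(1)] margin_def by (simp add: score_def inner_commute)
    have gnorm: "(norm g)\<^sup>2 = 2 * (norm x)\<^sup>2"
    proof -
      have "(norm g)\<^sup>2 = inner g g" by (simp add: power2_norm_eq_inner)
      also have "\<dots> = inner x (g $ kk) - inner x (g $ y)" by (subst (1) gdef, rule inner_grad[OF kk(1)])
      also have "\<dots> = 2 * (norm x)\<^sup>2" using kk(1) unfolding gdef by (simp add: power2_norm_eq_inner)
      finally show ?thesis .
    qed
    have "\<eta> * (norm x)\<^sup>2 \<le> \<eta> * X\<^sup>2"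
      using xX etap by (intro mult_left_mono power_mono) auto
    hence etax: "\<eta> / 2 * (norm g)\<^sup>2 \<le> (1 - t) * t" using etat gnorm by simp
    have ginner: "1 - margin W x y - hinge_loss_t ys t W x y U \<le> inner g (W - U)"
      using gW gU ell by (simp add: inner_diff_right)
    have mist_bound: "mist \<le> (1 - margin W x y) - (1 - t) * t"
    proof (cases "m > t")
      case True
      hence ne: "ys W x \<noteq> y" using False by simp
      have "gap_map t W x \<le> 0" using True unfolding gap_map_def m_def by simp
      hence "A = 0" unfolding A_def by simp
      hence "mist = 1" using mist_eq ne by simp
      moreover have "margin W x y \<le> - m"
        unfolding m_def using margin_other[OF vy K2] ne by metis
      ultimately show ?thesis using arith3[OF tpos t1 True] by simp
    next
      case nt: False
      have "gap_map t W x = 1 - m" using nt m0 unfolding gap_map_def m_def by simp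
      hence A: "A = 1 - m" using nt t1 unfolding A_def by simp
      show ?thesis
      proof (cases "ys W x = y")
        case True
        hence "mist = (1 - m) * (1 - t)" using mist_eq A by simp
        moreover have "margin W x y \<le> m" unfolding m_def by (rule margin_le_max)
        ultimately show ?thesis using arith1[OF tpos m0] nt by simp
      next
        case ne: False
        hence "mist = m + (1 - m) * (1 - t)" using mist_eq A by simp
        moreover have "margin W x y \<le> - m"
          unfolding m_def using margin_other[OF vy K2] ne by metis
        ultimately show ?thesis using arith2[OF tpos t1 m0] nt by simp
      qed
    qed
    show ?thesis using div etax ginner mist_bound by linarith
  qed
  thus ?thesis unfolding mist_def W'_def g_def t_def .
qed

lemma pred_prob_props:
  fixes ys :: "('d::finite,'k::finite) mat \<Rightarrow> real^'d \<Rightarrow> 'k"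
  shows "0 \<le> pred_prob ys (gap_map b) 0 W x k"
    and "(\<Sum>k\<in>UNIV. pred_prob ys (gap_map b) 0 W x k) = 1"
proof -
  define A where "A = max (gap_map b W x) 0"
  have A0: "0 \<le> A" unfolding A_def by simp
  have A1: "A \<le> 1" unfolding A_def gap_map_def by (auto simp: max_def)
  have pp: "pred_prob ys (gap_map b) 0 W x k = (1 - A) * (if k = ys W x then 1 else 0) + A / real CARD('k)" for k
    unfolding pred_prob_def A_def by (rule refl)
  show "0 \<le> pred_prob ys (gap_map b) 0 W x k" unfolding pp using A0 A1 by simp
  have "(\<Sum>k\<in>UNIV. pred_prob ys (gap_map b) 0 W x k) = (1 - A) + real CARD('k) * (A / real CARD('k))"
    unfolding pp by (simp add: sum.distrib flip: sum_distrib_left)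
  also have "\<dots> = 1" by simp
  finally show "(\<Sum>k\<in>UNIV. pred_prob ys (gap_map b) 0 W x k) = 1" .
qed

lemma induct_main:
  fixes ys :: "('d::finite,'k::finite) mat \<Rightarrow> real^'d \<Rightarrow> 'k"
    and kt :: "('d,'k) mat \<Rightarrow> real^'d \<Rightarrow> 'k \<Rightarrow> 'k"
    and env :: "'k list \<Rightarrow> 'k \<times> (real^'d)"
    and W U :: "('d,'k) mat"
  assumes K2: "CARD('k) \<ge> 2" and Xp: "X > 0" and envX: "\<forall>h. norm (snd (env h)) \<le> X"
    and D: "D \<ge> 0" and U: "norm U \<le> D"
    and vy: "valid_ystar ys" and vk: "valid_ktil kt"
    and K_def: "K = real CARD('k)" and eta: "\<eta> = (1 - 1/K) / (K * X\<^sup>2)"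
  shows "gaptron_exp D \<eta> 0 ys (gap_map (1/K)) (hinge_grad ys kt (1/K)) env (\<lambda>W x y k. if k \<noteq> y then 1 else 0) n h W
     \<le> gaptron_exp D \<eta> 0 ys (gap_map (1/K)) (hinge_grad ys kt (1/K)) env (\<lambda>W x y k. hinge_loss_t ys (1/K) W x y U) n h W
       + (norm (W - U))\<^sup>2 / (2 * \<eta>)"
proof (induction n arbitrary: h W)
  have etap: "\<eta> > 0" using Xp K2 unfolding eta K_def by (simp add: field_simps)
  case 0
  then show ?case using etap by simp
next
  case (Suc n)
  have etap: "\<eta> > 0" using Xp K2 unfolding eta K_def by (simp add: field_simps)
  define y where "y = fst (env h)"
  define x where "x = snd (env h)"
  define W' where "W' = gaptron_update D \<eta> (hinge_grad ys kt (1/K) W x y) W"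
  define p where "p = pred_prob ys (gap_map (1/K)) 0 W x"
  define G1 where "G1 = (\<lambda>k. gaptron_exp D \<eta> 0 ys (gap_map (1/K)) (hinge_grad ys kt (1/K)) env (\<lambda>W x y k. if k \<noteq> y then 1 else 0) n (h @ [k]) W')"
  define G2 where "G2 = (\<lambda>k. gaptron_exp D \<eta> 0 ys (gap_map (1/K)) (hinge_grad ys kt (1/K)) env (\<lambda>W x y k. hinge_loss_t ys (1/K) W x y U) n (h @ [k]) W')"
  define c' where "c' = (norm (W' - U))\<^sup>2 / (2 * \<eta>)"
  define l where "l = hinge_loss_t ys (1/K) W x y U"
  have p0: "0 \<le> p k" for k unfolding p_def by (rule pred_prob_props)
  have p1: "(\<Sum>k\<in>UNIV. p k) = 1" unfolding p_def by (rule pred_prob_props)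
  have IH: "G1 k \<le> G2 k + c'" for k unfolding G1_def G2_def c'_def by (rule Suc.IH)
  have L: "gaptron_exp D \<eta> 0 ys (gap_map (1/K)) (hinge_grad ys kt (1/K)) env (\<lambda>W x y k. if k \<noteq> y then 1 else 0) (Suc n) h W
     = (\<Sum>k\<in>UNIV. p k * ((if k \<noteq> y then 1 else 0) + G1 k))"
    by (simp add: Let_def p_def G1_def W'_def x_def y_def)
  have R: "gaptron_exp D \<eta> 0 ys (gap_map (1/K)) (hinge_grad ys kt (1/K)) env (\<lambda>W x y k. hinge_loss_t ys (1/K) W x y U) (Suc n) h W
     = (\<Sum>k\<in>UNIV. p k * (l + G2 k))"
    by (simp add: Let_def p_def G2_def W'_def x_def y_def l_def)
  have "(\<Sum>k\<in>UNIV. p k * ((if k \<noteq> y then 1 else 0) + G1 k))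
      \<le> (\<Sum>k\<in>UNIV. p k * ((if k \<noteq> y then 1 else 0) + G2 k + c'))"
    using IH p0 by (intro sum_mono mult_left_mono) (auto simp: add_mono)
  also have "\<dots> = (\<Sum>k\<in>UNIV. p k * (if k \<noteq> y then 1 else 0)) + (\<Sum>k\<in>UNIV. p k * G2 k) + c' * (\<Sum>k\<in>UNIV. p k)"
    by (simp add: algebra_simps sum.distrib sum_distrib_left)
  also have "\<dots> = (\<Sum>k\<in>UNIV. p k * (if k \<noteq> y then 1 else 0)) + c' + (\<Sum>k\<in>UNIV. p k * G2 k)"
    using p1 by simp
  also have "\<dots> \<le> l + (norm (W - U))\<^sup>2 / (2 * \<eta>) + (\<Sum>k\<in>UNIV. p k * G2 k)"
    using per_round[OF K2 Xp _ D U vy vk K_def eta, where x=x and y=y and W=W] envX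
    unfolding p_def c'_def W'_def l_def x_def by simp
  also have "\<dots> = (\<Sum>k\<in>UNIV. p k * (l + G2 k)) + (norm (W - U))\<^sup>2 / (2 * \<eta>)"
    using p1 by (simp add: distrib_left sum.distrib flip: sum_distrib_right)
  finally show ?case unfolding L R .
qed

theorem theorem2:
  fixes ys :: "('d::finite,'k::finite) mat \<Rightarrow> real^'d \<Rightarrow> 'k"
    and kt :: "('d,'k) mat \<Rightarrow> real^'d \<Rightarrow> 'k \<Rightarrow> 'k"
    and env :: "'k list \<Rightarrow> 'k \<times> (real^'d)"
    and X D :: real and T :: nat and U :: "('d,'k) mat"
  assumes "CARD('k) \<ge> 2" and "X > 0" and "D > 0" and "T \<ge> 1"
    and "valid_ystar ys" and "valid_ktil kt"
    and "\<forall>h. norm (snd (env h)) \<le> X"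
    and "norm U \<le> D"
  shows "(let K = real CARD('k); \<beta> = 1 / K; \<eta> = (1 - \<beta>) / (K * X\<^sup>2);
              grad = hinge_grad ys kt \<beta>; a = gap_map \<beta>
          in gaptron_exp D \<eta> 0 ys a grad env
               (\<lambda>W x y k. if k \<noteq> y then 1 else 0) T [] 0
             \<le> gaptron_exp D \<eta> 0 ys a grad env
               (\<lambda>W x y k. hinge_loss_t ys \<beta> W x y U) T [] 0
               + K\<^sup>2 * X\<^sup>2 * (norm U)\<^sup>2 / (2 * (K - 1)))"
proof -
  define K where "K = real CARD('k)"
  define \<eta> where "\<eta> = (1 - 1/K) / (K * X\<^sup>2)"
  have K2: "K \<ge> 2" using assms(1) K_def by simp
  note main = induct_main[OF assms(1,2,7) _ assms(8,5,6) K_def \<eta>_def, where n=T and h="[]" and W=0]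
  have eq: "(norm ((0::('d,'k) mat) - U))\<^sup>2 / (2 * \<eta>) = K\<^sup>2 * X\<^sup>2 * (norm U)\<^sup>2 / (2 * (K - 1))"
    using K2 assms(2) unfolding \<eta>_def by (simp add: field_simps power2_eq_square)
  show ?thesis
    using main assms(3) eq unfolding Let_def K_def[symmetric] \<eta>_def[symmetric] by simp
qed

end
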